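(* Let $\mathcal I$ be the poset of open connected intervals of $S^1$ whose closure is properly contained in $S^1$, ordered by inclusion. Every $\mathrm{C}^*$-net bundle $(\mathcal A,\jmath)_{\mathcal I}$ over $\mathcal I$ whose Čech cocycle is globally defined is trivial.
   Context: A $\mathrm{C}^*$-net bundle $(\mathcal A,\jmath)_K$ over a poset $K$: unital $\mathrm{C}^*$-algebras $\mathcal A_o$ ($o\in K$) and ${}^*$-isomorphisms $\jmath_{oa}:\mathcal A_a\to\mathcal A_o$ ($a\le o$) with $\jmath_{oa}\circ\jmath_{ae}=\jmath_{oe}$. It is trivial if there are ${}^*$-isomorphisms $\phi_o:\mathcal A_o\to\mathrm A$ onto a fixed $\mathrm{C}^*$-algebra with $\phi_o\circ\jmath_{oa}=\phi_a$ for all $a\le o$ (isomorphism with the constant net bundle). For nonempty $F\subseteq K$ and $o,\tilde o\in K$ with every element of $F$ below both $o$ and $\tilde o$, $(F;\tilde o,o)$ is a $1$-simplex of the simplicial set $\Sigma^\circ_*(K)$ (whose $n$-simplices are strings $(F;o_{n+1},\dots,o_1)$ with $F$ nonempty and every element of $F$ below every $o_i$). $\mathcal A^F_o$ is the $\mathrm{C}^*$-subalgebra of $\mathcal A_o$ generated by the $\jmath_{oa}(\mathcal A_a)$, $a\in F$. The Čech cocycle is defined on $(F;\tilde o,o)$ if there is a ${}^*$-isomorphism $\zeta^F_{\tilde oo}:\mathcal A^F_o\to\mathcal A^F_{\tilde o}$ with $\zeta^F_{\tilde oo}\circ\jmath_{oa}=\jmath_{\tilde oa}$ for all $a\in F$;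 it is globally defined if it is defined on every $1$-simplex of $\Sigma^\circ_*(K)$ (i.e. its domain is all of $\Sigma^\circ_*(K)$). *)

theory Defs
  imports "HOL-Analysis.Analysis"
begin

record 'a cstar =
  cs_carrier :: "'a set"
  cs_zero :: 'a
  cs_one :: 'a
  cs_add :: "'a \<Rightarrow> 'a \<Rightarrow> 'a"
  cs_mul :: "'a \<Rightarrow> 'a \<Rightarrow> 'a"
  cs_smul :: "complex \<Rightarrow> 'a \<Rightarrow> 'a"
  cs_star :: "'a \<Rightarrow> 'a"
  cs_norm :: "'a \<Rightarrow> real"

definition cs_diff :: "'a cstar \<Rightarrow> 'a \<Rightarrow> 'a \<Rightarrow> 'a" where
  "cs_diff A x y = cs_add A x (cs_smul A (-1) y)"

definition unital_cstar_algebra :: "'a cstar \<Rightarrow> bool" where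
  "unital_cstar_algebra A \<longleftrightarrow>
     (let C = cs_carrier A; p = cs_add A; m = cs_mul A; s = cs_smul A;
          st = cs_star A; n = cs_norm A; z = cs_zero A; u = cs_one A in
     \<comment> \<open>closure\<close>
     z \<in> C \<and> u \<in> C \<and>
     (\<forall>x\<in>C. \<forall>y\<in>C. p x y \<in> C \<and> m x y \<in> C) \<and>
     (\<forall>c. \<forall>x\<in>C. s c x \<in> C) \<and> (\<forall>x\<in>C. st x \<in> C) \<and>
     \<comment> \<open>complex vector space\<close>
     (\<forall>x\<in>C. \<forall>y\<in>C. \<forall>w\<in>C. p (p x y) w = p x (p y w)) \<and>
     (\<forall>x\<in>C. \<forall>y\<in>C. p x y = p y x) \<and>
     (\<forall>x\<in>C. p z x = x) \<and>
     (\<forall>x\<in>C. p x (s (-1) x) = z) \<and>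
     (\<forall>a b. \<forall>x\<in>C. s a (s b x) = s (a * b) x) \<and>
     (\<forall>x\<in>C. s 1 x = x) \<and>
     (\<forall>a. \<forall>x\<in>C. \<forall>y\<in>C. s a (p x y) = p (s a x) (s a y)) \<and>
     (\<forall>a b. \<forall>x\<in>C. s (a + b) x = p (s a x) (s b x)) \<and>
     \<comment> \<open>associative unital algebra\<close>
     (\<forall>x\<in>C. \<forall>y\<in>C. \<forall>w\<in>C. m (m x y) w = m x (m y w)) \<and>
     (\<forall>x\<in>C. \<forall>y\<in>C. \<forall>w\<in>C. m x (p y w) = p (m x y) (m x w)) \<and>
     (\<forall>x\<in>C. \<forall>y\<in>C. \<forall>w\<in>C. m (p x y) w = p (m x w) (m y w)) \<and>
     (\<forall>a. \<forall>x\<in>C. \<forall>y\<in>C. m (s a x) y = s a (m x y) \<and> m x (s a y) = s a (m x y)) \<and>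
     (\<forall>x\<in>C. m u x = x \<and> m x u = x) \<and>
     \<comment> \<open>involution\<close>
     (\<forall>x\<in>C. st (st x) = x) \<and>
     (\<forall>x\<in>C. \<forall>y\<in>C. st (p x y) = p (st x) (st y)) \<and>
     (\<forall>a. \<forall>x\<in>C. st (s a x) = s (cnj a) (st x)) \<and>
     (\<forall>x\<in>C. \<forall>y\<in>C. st (m x y) = m (st y) (st x)) \<and>
     \<comment> \<open>norm\<close>
     (\<forall>x\<in>C. n x \<ge> 0 \<and> (n x = 0 \<longleftrightarrow> x = z)) \<and>
     (\<forall>x\<in>C. \<forall>y\<in>C. n (p x y) \<le> n x + n y) \<and>
     (\<forall>a. \<forall>x\<in>C. n (s a x) = cmod a * n x) \<and>
     (\<forall>x\<in>C. \<forall>y\<in>C. n (m x y) \<le> n x * n y) \<and>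
     \<comment> \<open>C*-identity\<close>
     (\<forall>x\<in>C. n (m (st x) x) = (n x)\<^sup>2) \<and>
     \<comment> \<open>completeness\<close>
     (\<forall>q. (\<forall>k. q k \<in> C) \<longrightarrow>
          (\<forall>e>0. \<exists>N. \<forall>k\<ge>N. \<forall>l\<ge>N. n (cs_diff A (q k) (q l)) < e) \<longrightarrow>
          (\<exists>x\<in>C. (\<lambda>k. n (cs_diff A (q k) x)) \<longlonglongrightarrow> 0)))"

definition star_hom :: "'a cstar \<Rightarrow> 'b cstar \<Rightarrow> ('a \<Rightarrow> 'b) \<Rightarrow> bool" where
  "star_hom A B f \<longleftrightarrow>
     f ` cs_carrier A \<subseteq> cs_carrier B \<and>
     f (cs_one A) = cs_one B \<and>
     (\<forall>x\<in>cs_carrier A. \<forall>y\<in>cs_carrier A.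
        f (cs_add A x y) = cs_add B (f x) (f y) \<and> f (cs_mul A x y) = cs_mul B (f x) (f y)) \<and>
     (\<forall>c. \<forall>x\<in>cs_carrier A. f (cs_smul A c x) = cs_smul B c (f x)) \<and>
     (\<forall>x\<in>cs_carrier A. f (cs_star A x) = cs_star B (f x))"

definition star_iso :: "'a cstar \<Rightarrow> 'b cstar \<Rightarrow> ('a \<Rightarrow> 'b) \<Rightarrow> bool" where
  "star_iso A B f \<longleftrightarrow> star_hom A B f \<and> bij_betw f (cs_carrier A) (cs_carrier B)"

definition closed_star_subalgebra :: "'a cstar \<Rightarrow> 'a set \<Rightarrow> bool" where
  "closed_star_subalgebra A T \<longleftrightarrow>
     T \<subseteq> cs_carrier A \<and> cs_zero A \<in> T \<and>
     (\<forall>x\<in>T. \<forall>y\<in>T. cs_add A x y \<in> T \<and> cs_mul A x y \<in> T) \<and>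
     (\<forall>c. \<forall>x\<in>T. cs_smul A c x \<in> T) \<and> (\<forall>x\<in>T. cs_star A x \<in> T) \<and>
     (\<forall>q l. (\<forall>k. q k \<in> T) \<longrightarrow> l \<in> cs_carrier A \<longrightarrow>
        (\<lambda>k. cs_norm A (cs_diff A (q k) l)) \<longlonglongrightarrow> 0 \<longrightarrow> l \<in> T)"

definition generated_cstar :: "'a cstar \<Rightarrow> 'a set \<Rightarrow> 'a set" where
  "generated_cstar A S = \<Inter> {T. closed_star_subalgebra A T \<and> S \<subseteq> T}"

definition restrict_cstar :: "'a cstar \<Rightarrow> 'a set \<Rightarrow> 'a cstar" where
  "restrict_cstar A T = A\<lparr>cs_carrier := T\<rparr>"

definition cstar_net_bundle ::
  "'i set \<Rightarrow> ('i \<Rightarrow> 'i \<Rightarrow> bool) \<Rightarrow> ('i \<Rightarrow> 'a cstar) \<Rightarrow> ('i \<Rightarrow> 'i \<Rightarrow> 'a \<Rightarrow> 'a) \<Rightarrow> bool" where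
  "cstar_net_bundle K le A j \<longleftrightarrow>
     (\<forall>p\<in>K. unital_cstar_algebra (A p)) \<and>
     (\<forall>p\<in>K. \<forall>a\<in>K. le a p \<longrightarrow> star_iso (A a) (A p) (j p a)) \<and>
     (\<forall>p\<in>K. \<forall>a\<in>K. \<forall>e\<in>K. le e a \<longrightarrow> le a p \<longrightarrow>
        (\<forall>x\<in>cs_carrier (A e). j p a (j a e x) = j p e x))"

definition trivial_net_bundle ::
  "'i set \<Rightarrow> ('i \<Rightarrow> 'i \<Rightarrow> bool) \<Rightarrow> ('i \<Rightarrow> 'a cstar) \<Rightarrow> ('i \<Rightarrow> 'i \<Rightarrow> 'a \<Rightarrow> 'a) \<Rightarrow> bool" where
  "trivial_net_bundle K le A j \<longleftrightarrow>
     (\<exists>(B :: 'a cstar) (\<phi> :: 'i \<Rightarrow> 'a \<Rightarrow> 'a).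
        unital_cstar_algebra B \<and>
        (\<forall>p\<in>K. star_iso (A p) B (\<phi> p)) \<and>
        (\<forall>p\<in>K. \<forall>a\<in>K. le a p \<longrightarrow> (\<forall>x\<in>cs_carrier (A a). \<phi> p (j p a x) = \<phi> a x)))"

definition one_simplex :: "'i set \<Rightarrow> ('i \<Rightarrow> 'i \<Rightarrow> bool) \<Rightarrow> 'i set \<Rightarrow> 'i \<Rightarrow> 'i \<Rightarrow> bool" where
  "one_simplex K le F p' p \<longleftrightarrow>
     F \<noteq> {} \<and> F \<subseteq> K \<and> p \<in> K \<and> p' \<in> K \<and> (\<forall>a\<in>F. le a p \<and> le a p')"

definition net_sub :: "('i \<Rightarrow> 'a cstar) \<Rightarrow> ('i \<Rightarrow> 'i \<Rightarrow> 'a \<Rightarrow> 'a) \<Rightarrow> 'i set \<Rightarrow> 'i \<Rightarrow> 'a cstar" where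
  "net_sub A j F p = restrict_cstar (A p)
     (generated_cstar (A p) (\<Union>a\<in>F. j p a ` cs_carrier (A a)))"

definition cech_defined_on ::
  "('i \<Rightarrow> 'a cstar) \<Rightarrow> ('i \<Rightarrow> 'i \<Rightarrow> 'a \<Rightarrow> 'a) \<Rightarrow> 'i set \<Rightarrow> 'i \<Rightarrow> 'i \<Rightarrow> bool" where
  "cech_defined_on A j F p' p \<longleftrightarrow>
     (\<exists>\<zeta>. star_iso (net_sub A j F p) (net_sub A j F p') \<zeta> \<and>
          (\<forall>a\<in>F. \<forall>x\<in>cs_carrier (A a). \<zeta> (j p a x) = j p' a x))"

definition cech_globally_defined ::
  "'i set \<Rightarrow> ('i \<Rightarrow> 'i \<Rightarrow> bool) \<Rightarrow> ('i \<Rightarrow> 'a cstar) \<Rightarrow> ('i \<Rightarrow> 'i \<Rightarrow> 'a \<Rightarrow> 'a) \<Rightarrow> bool" where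
  "cech_globally_defined K le A j \<longleftrightarrow>
     (\<forall>F p' p. one_simplex K le F p' p \<longrightarrow> cech_defined_on A j F p' p)"

definition S1 :: "complex set" where
  "S1 = sphere 0 1"

definition circle_intervals :: "complex set set" where
  "circle_intervals = {I. I \<noteq> {} \<and> openin (top_of_set S1) I \<and> connected I \<and> closure I \<subset> S1}"

end

theory Submission
  imports Defs
begin


definition bc :: "complex \<Rightarrow> real \<Rightarrow> complex set" where
  "bc z r = S1 \<inter> ball z r"

lemma normsq_diff_unit:
  fixes x z :: complex
  assumes "cmod x = 1" "cmod z = 1"
  shows "(cmod (x - z))\<^sup>2 = 2 - 2 * Re (x * cnj z)"
proof -
  have "(Re x)\<^sup>2 + (Im x)\<^sup>2 = 1" "(Re z)\<^sup>2 + (Im z)\<^sup>2 = 1"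
    using assms by (metis cmod_power2 power_one)+
  moreover have "(cmod (x - z))\<^sup>2 = (Re x - Re z)\<^sup>2 + (Im x - Im z)\<^sup>2"
    by (simp add: cmod_power2)
  ultimately show ?thesis by (simp add: power2_eq_square algebra_simps)
qed

lemma normsq_sum_unit:
  fixes x z :: complex
  assumes "cmod x = 1" "cmod z = 1"
  shows "(cmod (x + z))\<^sup>2 + (cmod (x - z))\<^sup>2 = 4"
proof -
  have "(Re x)\<^sup>2 + (Im x)\<^sup>2 = 1" "(Re z)\<^sup>2 + (Im z)\<^sup>2 = 1"
    using assms by (metis cmod_power2 power_one)+
  moreover have "(cmod (x - z))\<^sup>2 = (Re x - Re z)\<^sup>2 + (Im x - Im z)\<^sup>2"
    "(cmod (x + z))\<^sup>2 = (Re x + Re z)\<^sup>2 + (Im x + Im z)\<^sup>2"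
    by (simp_all add: cmod_power2)
  ultimately show ?thesis by (simp add: power2_eq_square algebra_simps)
qed

lemma bc_image:
  assumes z: "cmod z = 1" and r: "0 < r" "r < 2"
  defines "\<theta> \<equiv> arccos (1 - r\<^sup>2/2)"
  shows "bc z r = (\<lambda>t. z * cis t) ` {-\<theta><..<\<theta>}"
proof -
  have c1: "-1 < 1 - r\<^sup>2/2" "1 - r\<^sup>2/2 < 1"
  proof -
    have "r\<^sup>2 < 2\<^sup>2" using r by (intro power_strict_mono) auto
    moreover have "0 < r\<^sup>2" using r by simp
    ultimately show "-1 < 1 - r\<^sup>2/2" "1 - r\<^sup>2/2 < 1" by auto
  qed
  have th: "0 < \<theta>" "\<theta> < pi" "cos \<theta> = 1 - r\<^sup>2/2"
    using c1 unfolding \<theta>_def by (auto intro!: arccos_lt_bounded[THEN conjunct1] arccos_lt_bounded[THEN conjunct2])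
  have key: "cmod (z * cis t - z) < r \<longleftrightarrow> cos t > cos \<theta>" for t
  proof -
    have "cmod (z * cis t - z) = cmod (cis t - 1)"
      by (metis mult.commute mult_1 norm_mult right_diff_distrib' z)
    moreover have "(cmod (cis t - 1))\<^sup>2 = 2 - 2 * cos t"
      using normsq_diff_unit[of "cis t" 1] by simp
    moreover have "cmod (cis t - 1) < r \<longleftrightarrow> (cmod (cis t - 1))\<^sup>2 < r\<^sup>2"
    proof
      assume h: "cmod (cis t - 1) < r"
      show "(cmod (cis t - 1))\<^sup>2 < r\<^sup>2" by (rule power_strict_mono[OF h norm_ge_zero]) simp
    next
      assume h: "(cmod (cis t - 1))\<^sup>2 < r\<^sup>2"
      show "cmod (cis t - 1) < r" by (rule power_less_imp_less_base[OF h]) (use r in simp)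
    qed
    ultimately show ?thesis using th by auto
  qed
  have cosiff: "cos t > cos \<theta> \<longleftrightarrow> -\<theta> < t \<and> t < \<theta>" if "-pi \<le> t" "t \<le> pi" for t
  proof (cases "t \<ge> 0")
    case True thus ?thesis using cos_mono_less_eq[of \<theta> t] th that by auto
  next
    case False thus ?thesis using cos_mono_less_eq[of \<theta> "-t"] th that by auto
  qed
  show ?thesis
  proof (intro set_eqI iffI)
    fix x assume "x \<in> bc z r"
    hence x: "cmod x = 1" "cmod (x - z) < r" by (auto simp: bc_def S1_def dist_norm norm_minus_commute)
    define y where "y = x * cnj z"
    have y1: "cmod y = 1" using x z by (simp add: y_def norm_mult)
    have "z * cnj z = 1" using z by (simp add: complex_mult_cnj cmod_def)
    hence xy: "x = z * y" by (simp add: y_def algebra_simps)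
    have "y \<noteq> 0" using y1 by auto
    hence cy: "cis (Arg y) = y" using y1 by (simp add: cis_Arg sgn_div_norm)
    have "cmod (z * cis (Arg y) - z) < r" using x xy cy by simp
    hence "-\<theta> < Arg y \<and> Arg y < \<theta>" using key cosiff Arg_bounded[of y] by auto
    thus "x \<in> (\<lambda>t. z * cis t) ` {-\<theta><..<\<theta>}" using xy cy by (auto intro!: image_eqI[of _ _ "Arg y"])
  next
    fix x assume "x \<in> (\<lambda>t. z * cis t) ` {-\<theta><..<\<theta>}"
    then obtain t where t0: "x = z * cis t" "t \<in> {-\<theta><..<\<theta>}" by (rule imageE)
    hence t: "x = z * cis t" "-\<theta> < t" "t < \<theta>" by simp_all
    hence "cos t > cos \<theta>" using cosiff th by auto
    hence "cmod (x - z) < r" using key t by simp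
    thus "x \<in> bc z r" using t z by (auto simp: bc_def S1_def dist_norm norm_mult norm_minus_commute)
  qed
qed

lemma bc_connected:
  assumes z: "cmod z = 1" and r: "0 < r" "r < 2"
  shows "connected (bc z r)"
  unfolding bc_image[OF assms]
  by (intro connected_continuous_image continuous_intros) auto


lemma bc_in_K:
  assumes z: "cmod z = 1" and r: "0 < r" "r < 2"
  shows "bc z r \<in> circle_intervals"
proof -
  have zin: "z \<in> bc z r" using z r by (simp add: bc_def S1_def)
  have op: "openin (top_of_set S1) (bc z r)" unfolding bc_def by auto
  have cl: "closure (bc z r) \<subseteq> S1 \<inter> cball z r"
    unfolding bc_def by (intro closure_minimal) (auto simp: S1_def)
  have "-z \<in> S1" using z by (simp add: S1_def)
  moreover have "-z \<notin> cball z r" using z r by (simp add: dist_norm)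
  ultimately have "closure (bc z r) \<subset> S1" using cl by auto
  thus ?thesis using zin op bc_connected[OF assms] unfolding circle_intervals_def by auto
qed

lemma K_contains_tiny:
  assumes "p \<in> circle_intervals"
  shows "\<exists>z r. cmod z = 1 \<and> 0 < r \<and> r \<le> 1/20 \<and> bc z r \<subseteq> p"
proof -
  from assms obtain z where zp: "z \<in> p" and op: "openin (top_of_set S1) p"
    unfolding circle_intervals_def by auto
  from op zp obtain e where e: "e > 0" "\<forall>x'\<in>S1. dist x' z < e \<longrightarrow> x' \<in> p" and pS: "p \<subseteq> S1"
    unfolding openin_euclidean_subtopology_iff by blast
  have "cmod z = 1" using zp pS by (auto simp: S1_def)
  moreover have "bc z (min e (1/20)) \<subseteq> p" using e by (auto simp: bc_def dist_commute)
  ultimately show ?thesis using e by (intro exI[of _ z] exI[of _ "min e (1/20)"]) auto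
qed

lemma far_point:
  fixes z1 z2 z3 :: complex
  shows "\<exists>w. cmod w = 1 \<and> cmod (z1 - w) \<ge> 7/10 \<and> cmod (z2 - w) \<ge> 7/10 \<and> cmod (z3 - w) \<ge> 7/10"
proof -
  have s2: "7/5 \<le> sqrt (2::real)" by (rule real_le_rsqrt) (simp add: power2_eq_square)
  let ?c = "[1, -1, \<i>, -\<i>] :: complex list"
  have sep: "7/10 \<le> cmod (z - c) \<or> 7/10 \<le> cmod (z - c')"
    if "7/5 \<le> cmod (c - c')" for z c c' :: complex
  proof -
    have e: "c - c' = (z - c') - (z - c)" by simp
    have "cmod (c - c') \<le> cmod (z - c') + cmod (z - c)"
      unfolding e by (rule norm_triangle_ineq4)
    thus ?thesis using that by linarith
  qed
  have d: "7/5 \<le> cmod (1 - (-1::complex))" "7/5 \<le> cmod (1 - \<i>)" "7/5 \<le> cmod (1 - (-\<i>))"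
    "7/5 \<le> cmod (-1 - \<i>)" "7/5 \<le> cmod (-1 - (-\<i>))" "7/5 \<le> cmod (\<i> - (-\<i>))"
    using s2 by (simp_all add: cmod_def)
  note S = sep[OF d(1)] sep[OF d(2)] sep[OF d(3)] sep[OF d(4)] sep[OF d(5)] sep[OF d(6)]
  let ?P = "\<lambda>w. cmod (z1 - w) \<ge> 7/10 \<and> cmod (z2 - w) \<ge> 7/10 \<and> cmod (z3 - w) \<ge> 7/10"
  have "?P 1 \<or> ?P (-1) \<or> ?P \<i> \<or> ?P (-\<i>)"
    using S[of z1] S[of z2] S[of z3] by sat
  thus ?thesis by (metis norm_minus_cancel norm_one norm_ii)
qed

lemma three_tiny_ub:
  assumes "cmod z1 = 1" "cmod z2 = 1" "cmod z3 = 1" "r1 \<le> 1/20" "r2 \<le> 1/20" "r3 \<le> 1/20"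
  shows "\<exists>s\<in>circle_intervals. bc z1 r1 \<subseteq> s \<and> bc z2 r2 \<subseteq> s \<and> bc z3 r3 \<subseteq> s"
proof -
  obtain w where w: "cmod w = 1" "cmod (z1 - w) \<ge> 7/10" "cmod (z2 - w) \<ge> 7/10" "cmod (z3 - w) \<ge> 7/10"
    using far_point by blast
  have mw: "cmod (-w) = 1" using w by simp
  have inc: "bc z r \<subseteq> bc (-w) (19/10)" if "cmod (z - w) \<ge> 7/10" "r \<le> 1/20" for z r
  proof
    fix x assume "x \<in> bc z r"
    hence x: "cmod x = 1" "cmod (x - z) < r" by (auto simp: bc_def S1_def dist_norm norm_minus_commute)
    have "cmod (z - w) \<le> cmod (z - x) + cmod (x - w)" by (rule norm_diff_triangle_le[of z x]) simp_all
    hence xw: "cmod (x - w) > 13/20" using x that by (simp add: norm_minus_commute)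
    hence "(13/20)\<^sup>2 < (cmod (x - w))\<^sup>2" by (intro power_strict_mono) auto
    hence "(cmod (x + w))\<^sup>2 < (19/10)\<^sup>2" using normsq_sum_unit[OF x(1) w(1)] by (simp add: power2_eq_square)
    hence "cmod (x + w) < 19/10" by (rule power_less_imp_less_base) simp
    moreover have "cmod (- w - x) = cmod (x + w)" by (metis minus_diff_eq norm_minus_cancel diff_minus_eq_add add.commute)
    ultimately show "x \<in> bc (-w) (19/10)" using x by (simp add: bc_def S1_def dist_norm)
  qed
  show ?thesis
    using inc[OF w(2) assms(4)] inc[OF w(3) assms(5)] inc[OF w(4) assms(6)] bc_in_K[OF mw]
    by (intro bexI[of _ "bc (-w) (19/10)"]) auto
qed


lemma star_iso_comp:
  assumes "star_iso A B f" "star_iso B C g"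
  shows "star_iso A C (g \<circ> f)"
proof -
  have fi: "\<And>x. x \<in> cs_carrier A \<Longrightarrow> f x \<in> cs_carrier B"
    using assms(1) unfolding star_iso_def star_hom_def by auto
  show ?thesis using assms fi unfolding star_iso_def star_hom_def
    by (auto intro: bij_betw_trans)
qed

lemma star_iso_inv:
  assumes uA: "unital_cstar_algebra A" and f: "star_iso A B f"
  shows "star_iso B A (inv_into (cs_carrier A) f)"
proof -
  let ?g = "inv_into (cs_carrier A) f"
  have bij: "bij_betw f (cs_carrier A) (cs_carrier B)" using f by (simp add: star_iso_def)
  have inj: "inj_on f (cs_carrier A)" and im: "f ` cs_carrier A = cs_carrier B"
    using bij by (auto simp: bij_betw_def)
  have h: "star_hom A B f" using f by (simp add: star_iso_def)
  have cl: "cs_one A \<in> cs_carrier A"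
    "\<And>x y. x \<in> cs_carrier A \<Longrightarrow> y \<in> cs_carrier A \<Longrightarrow> cs_add A x y \<in> cs_carrier A"
    "\<And>x y. x \<in> cs_carrier A \<Longrightarrow> y \<in> cs_carrier A \<Longrightarrow> cs_mul A x y \<in> cs_carrier A"
    "\<And>c x. x \<in> cs_carrier A \<Longrightarrow> cs_smul A c x \<in> cs_carrier A"
    "\<And>x. x \<in> cs_carrier A \<Longrightarrow> cs_star A x \<in> cs_carrier A"
    using uA unfolding unital_cstar_algebra_def Let_def by auto
  have gin: "\<And>y. y \<in> cs_carrier B \<Longrightarrow> ?g y \<in> cs_carrier A"
    using im by (metis inv_into_into)
  have fg: "\<And>y. y \<in> cs_carrier B \<Longrightarrow> f (?g y) = y"
    using im by (metis f_inv_into_f)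
  have gf: "\<And>x. x \<in> cs_carrier A \<Longrightarrow> ?g (f x) = x"
    using inj by (metis inv_into_f_f)
  have hf: "f (cs_one A) = cs_one B"
    "\<And>x y. x \<in> cs_carrier A \<Longrightarrow> y \<in> cs_carrier A \<Longrightarrow> f (cs_add A x y) = cs_add B (f x) (f y)"
    "\<And>x y. x \<in> cs_carrier A \<Longrightarrow> y \<in> cs_carrier A \<Longrightarrow> f (cs_mul A x y) = cs_mul B (f x) (f y)"
    "\<And>c x. x \<in> cs_carrier A \<Longrightarrow> f (cs_smul A c x) = cs_smul B c (f x)"
    "\<And>x. x \<in> cs_carrier A \<Longrightarrow> f (cs_star A x) = cs_star B (f x)"
    using h unfolding star_hom_def by auto
  have "star_hom B A ?g"
    unfolding star_hom_def
  proof (intro conjI ballI allI)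
    show "?g ` cs_carrier B \<subseteq> cs_carrier A" using gin by auto
    show "?g (cs_one B) = cs_one A" using gf[OF cl(1)] hf(1) by simp
  next
    fix x y assume xy: "x \<in> cs_carrier B" "y \<in> cs_carrier B"
    show "?g (cs_add B x y) = cs_add A (?g x) (?g y)"
      using hf(2)[OF gin gin, OF xy] fg xy gf[OF cl(2)[OF gin gin, OF xy]] by metis
    show "?g (cs_mul B x y) = cs_mul A (?g x) (?g y)"
      using hf(3)[OF gin gin, OF xy] fg xy gf[OF cl(3)[OF gin gin, OF xy]] by metis
  next
    fix c x assume x: "x \<in> cs_carrier B"
    show "?g (cs_smul B c x) = cs_smul A c (?g x)"
      using hf(4)[OF gin, OF x] fg x gf[OF cl(4)[OF gin, OF x]] by metis
  next
    fix x assume x: "x \<in> cs_carrier B"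
    show "?g (cs_star B x) = cs_star A (?g x)"
      using hf(5)[OF gin, OF x] fg x gf[OF cl(5)[OF gin, OF x]] by metis
  qed
  moreover have "bij_betw ?g (cs_carrier B) (cs_carrier A)" using bij by (rule bij_betw_inv_into)
  ultimately show ?thesis by (simp add: star_iso_def)
qed


theorem lemma5p11:
  fixes A :: "complex set \<Rightarrow> 'a cstar"
    and j :: "complex set \<Rightarrow> complex set \<Rightarrow> 'a \<Rightarrow> 'a"
  assumes "cstar_net_bundle circle_intervals (\<subseteq>) A j"
    and "cech_globally_defined circle_intervals (\<subseteq>) A j"
  shows "trivial_net_bundle circle_intervals (\<subseteq>) A j"
proof -
  let ?K = circle_intervals
  define C where "C = (\<lambda>p. cs_carrier (A p))"
  have nb1: "\<forall>p\<in>?K. unital_cstar_algebra (A p)"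
    and nb2: "\<forall>p\<in>?K. \<forall>a\<in>?K. a \<subseteq> p \<longrightarrow> star_iso (A a) (A p) (j p a)"
    and nb3: "\<forall>p\<in>?K. \<forall>a\<in>?K. \<forall>e\<in>?K. e \<subseteq> a \<longrightarrow> a \<subseteq> p \<longrightarrow>
        (\<forall>x\<in>C e. j p a (j a e x) = j p e x)"
    using assms(1) unfolding cstar_net_bundle_def C_def by simp_all
  have uA: "\<And>p. p \<in> ?K \<Longrightarrow> unital_cstar_algebra (A p)"
    using nb1 by simp
  have iso: "\<And>p a. p \<in> ?K \<Longrightarrow> a \<in> ?K \<Longrightarrow> a \<subseteq> p \<Longrightarrow> star_iso (A a) (A p) (j p a)"
    using nb2 by simp
  have comp: "\<And>p a e x. p \<in> ?K \<Longrightarrow> a \<in> ?K \<Longrightarrow> e \<in> ?K \<Longrightarrow> e \<subseteq> a \<Longrightarrow> a \<subseteq> p \<Longrightarrow>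
        x \<in> C e \<Longrightarrow> j p a (j a e x) = j p e x"
    using nb3 by simp
  have bij: "\<And>p a. p \<in> ?K \<Longrightarrow> a \<in> ?K \<Longrightarrow> a \<subseteq> p \<Longrightarrow> bij_betw (j p a) (C a) (C p)"
    using iso unfolding star_iso_def C_def by blast
  have jin: "\<And>p a x. p \<in> ?K \<Longrightarrow> a \<in> ?K \<Longrightarrow> a \<subseteq> p \<Longrightarrow> x \<in> C a \<Longrightarrow> j p a x \<in> C p"
    using bij by (meson bij_betwE)
  have inv_in: "\<And>p a y. p \<in> ?K \<Longrightarrow> a \<in> ?K \<Longrightarrow> a \<subseteq> p \<Longrightarrow> y \<in> C p \<Longrightarrow>
      inv_into (C a) (j p a) y \<in> C a \<and> j p a (inv_into (C a) (j p a) y) = y"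
    using bij by (metis bij_betw_def inv_into_into f_inv_into_f)
  have inv_f: "\<And>p a x. p \<in> ?K \<Longrightarrow> a \<in> ?K \<Longrightarrow> a \<subseteq> p \<Longrightarrow> x \<in> C a \<Longrightarrow>
      inv_into (C a) (j p a) (j p a x) = x"
    using bij by (metis bij_betw_def inv_into_f_f)
  have indep: "inv_into (C b) (j s b) (j s a x) = inv_into (C b) (j s' b) (j s' a x)"
    if "a \<in> ?K" "b \<in> ?K" "s \<in> ?K" "s' \<in> ?K" "a \<subseteq> s" "b \<subseteq> s" "a \<subseteq> s'" "b \<subseteq> s'" "x \<in> C a"
    for a b s s' x
  proof -
    have "one_simplex ?K (\<subseteq>) {a, b} s' s" using that unfolding one_simplex_def by auto
    hence "cech_defined_on A j {a, b} s' s" using assms(2) unfolding cech_globally_defined_def by blast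
    then obtain \<zeta> where z: "\<forall>c\<in>{a,b}. \<forall>x\<in>C c. \<zeta> (j s c x) = j s' c x"
      unfolding cech_defined_on_def C_def by blast
    define y where "y = inv_into (C b) (j s b) (j s a x)"
    have y: "y \<in> C b" "j s b y = j s a x" using inv_in[OF that(3,2,6) jin[OF that(3,1,5,9)]] y_def by auto
    have "j s' a x = j s' b y" using z y that(9) by (metis insertCI)
    thus ?thesis using inv_f[OF that(4,2,8) y(1)] y_def by simp
  qed
  define ub where "ub = (\<lambda>a b. SOME s. s \<in> ?K \<and> a \<subseteq> s \<and> b \<subseteq> s)"
  define T where "T = (\<lambda>b a. inv_into (C b) (j (ub a b) b) \<circ> j (ub a b) a)"
  have ubp: "ub a b \<in> ?K \<and> a \<subseteq> ub a b \<and> b \<subseteq> ub a b"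
    if "s \<in> ?K" "a \<subseteq> s" "b \<subseteq> s" for a b s
    unfolding ub_def by (rule someI[of _ s]) (use that in auto)
  have Tvia: "T b a x = inv_into (C b) (j s b) (j s a x)"
    if "a \<in> ?K" "b \<in> ?K" "s \<in> ?K" "a \<subseteq> s" "b \<subseteq> s" "x \<in> C a" for a b s x
    using indep[of a b "ub a b" s x] ubp[OF that(3-5)] that unfolding T_def by auto
  have Tiso: "star_iso (A a) (A b) (T b a)"
    if "a \<in> ?K" "b \<in> ?K" "s \<in> ?K" "a \<subseteq> s" "b \<subseteq> s" for a b s
  proof -
    have u: "ub a b \<in> ?K" "a \<subseteq> ub a b" "b \<subseteq> ub a b" using ubp[OF that(3-5)] by auto
    show ?thesis unfolding T_def C_def
      by (rule star_iso_comp[OF iso[OF u(1) that(1) u(2)] star_iso_inv[OF uA[OF that(2)] iso[OF u(1) that(2) u(3)]]])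
  qed
  have tri: "T c b (T b a x) = T c a x"
    if "a \<in> ?K" "b \<in> ?K" "c \<in> ?K" "s \<in> ?K" "a \<subseteq> s" "b \<subseteq> s" "c \<subseteq> s" "x \<in> C a" for a b c s x
  proof -
    define y where "y = inv_into (C b) (j s b) (j s a x)"
    have y: "y \<in> C b" "j s b y = j s a x" using inv_in[OF that(4,2,6) jin[OF that(4,1,5,8)]] y_def by auto
    have "T b a x = y" using Tvia[OF that(1,2,4,5,6,8)] y_def by simp
    moreover have "T c b y = inv_into (C c) (j s c) (j s b y)" using Tvia[OF that(2,3,4,6,7) y(1)] .
    moreover have "T c a x = inv_into (C c) (j s c) (j s a x)" using Tvia[OF that(1,3,4,5,7,8)] .
    ultimately show ?thesis using y by simp
  qed
  define tinyset where "tinyset = (\<lambda>c. \<exists>z r. cmod z = 1 \<and> 0 < r \<and> r \<le> 1/20 \<and> c = bc z r)"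
  define tiny where "tiny = (\<lambda>p. SOME c. tinyset c \<and> c \<subseteq> p)"
  have tinyK: "c \<in> ?K" if "tinyset c" for c
    using that bc_in_K unfolding tinyset_def by force
  have tinyp: "tinyset (tiny p) \<and> tiny p \<subseteq> p" if pK: "p \<in> ?K" for p
  proof -
    obtain z r where "cmod z = 1 \<and> 0 < r \<and> r \<le> 1/20 \<and> bc z r \<subseteq> p"
      using K_contains_tiny[OF pK] by blast
    hence "tinyset (bc z r) \<and> bc z r \<subseteq> p" unfolding tinyset_def by blast
    thus ?thesis unfolding tiny_def by (rule someI)
  qed
  have three: "\<exists>s\<in>?K. a \<subseteq> s \<and> b \<subseteq> s \<and> c \<subseteq> s" if ta: "tinyset a" and tb: "tinyset b" and tc: "tinyset c" for a b c
  proof -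
    obtain z1 r1 where 1: "cmod z1 = 1" "r1 \<le> 1/20" "a = bc z1 r1" using ta unfolding tinyset_def by blast
    obtain z2 r2 where 2: "cmod z2 = 1" "r2 \<le> 1/20" "b = bc z2 r2" using tb unfolding tinyset_def by blast
    obtain z3 r3 where 3: "cmod z3 = 1" "r3 \<le> 1/20" "c = bc z3 r3" using tc unfolding tinyset_def by blast
    show ?thesis using three_tiny_ub[OF 1(1) 2(1) 3(1) 1(2) 2(2) 3(2)] unfolding 1(3) 2(3) 3(3) .
  qed
  define r0 where "r0 = bc 1 (1/20)"
  have r0: "tinyset r0" unfolding tinyset_def r0_def by (intro exI[of _ 1] exI[of _ "1/20"]) auto
  have r0K: "r0 \<in> ?K" using tinyK[OF r0] .
  define \<phi> where "\<phi> = (\<lambda>p. T r0 (tiny p) \<circ> inv_into (C (tiny p)) (j p (tiny p)))"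
  have phi_iso: "star_iso (A p) (A r0) (\<phi> p)" if "p \<in> ?K" for p
  proof -
    have t: "tinyset (tiny p)" "tiny p \<subseteq> p" "tiny p \<in> ?K" using tinyp[OF that] tinyK by auto
    obtain s where s: "s \<in> ?K" "tiny p \<subseteq> s" "r0 \<subseteq> s" using three[OF t(1) r0 r0] by blast
    show ?thesis unfolding \<phi>_def C_def
      by (rule star_iso_comp[OF star_iso_inv[OF uA[OF t(3)] iso[OF that t(3) t(2)]] Tiso[OF t(3) r0K s]])
  qed
  have phi_comp: "\<phi> p (j p a x) = \<phi> a x"
    if "p \<in> ?K" "a \<in> ?K" "a \<subseteq> p" "x \<in> C a" for p a x
  proof -
    define cp where "cp = tiny p"
    define ca where "ca = tiny a"
    have cp: "tinyset cp" "cp \<subseteq> p" "cp \<in> ?K" using tinyp[OF that(1)] tinyK cp_def by auto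
    have ca: "tinyset ca" "ca \<subseteq> a" "ca \<in> ?K" using tinyp[OF that(2)] tinyK ca_def by auto
    define u where "u = inv_into (C ca) (j a ca) x"
    have u: "u \<in> C ca" "j a ca u = x" using inv_in[OF that(2) ca(3,2) that(4)] u_def by auto
    have jpa: "j p a x = j p ca u" using comp[OF that(1,2) ca(3) ca(2) that(3) u(1)] u(2) by simp
    have "inv_into (C cp) (j p cp) (j p a x) = T cp ca u"
      using Tvia[OF ca(3) cp(3) that(1) _ cp(2) u(1)] ca(2) that(3) jpa by auto
    moreover obtain s where s: "s \<in> ?K" "ca \<subseteq> s" "cp \<subseteq> s" "r0 \<subseteq> s" using three[OF ca(1) cp(1) r0] by blast
    ultimately have "\<phi> p (j p a x) = T r0 ca u"
      using tri[OF ca(3) cp(3) r0K s u(1)] unfolding \<phi>_def cp_def by simp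
    thus ?thesis unfolding \<phi>_def by (simp add: ca_def u_def)
  qed
  show ?thesis unfolding trivial_net_bundle_def
    using uA[OF r0K] phi_iso phi_comp unfolding C_def by blast
qed

end
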